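(* Consider a collaborative learning problem with $k$ agents, strategy space $\Theta\subseteq\mathbb{R}_+^k$, utilities $u_i$ and thresholds $\mu_i$, and for each $i$ let $\vartheta_i\ge0$ satisfy $u_i(\vartheta_i,\mathbf{0}_{-i})\ge\mu_i$. Define the best-response map $\mathbf{f}:\prod_{i=1}^k[0,\vartheta_i]\to\prod_{i=1}^k[0,\vartheta_i]$ by $\mathbf{f}({\boldsymbol\theta})=(f_i({\boldsymbol\theta}))_{i\in[k]}$, where $f_i({\boldsymbol\theta})$ is the smallest $x\ge0$ with $u_i(x,{\boldsymbol\theta}_{-i})\ge\mu_i$. If the utilities are well-behaved over $\prod_{i=1}^k[0,\vartheta_i]\subseteq\Theta$, then $\mathbf{f}$ has a fixed point, i.e. there is ${\boldsymbol\theta}\in\prod_{i=1}^k[0,\vartheta_i]$ with $\mathbf{f}({\boldsymbol\theta})={\boldsymbol\theta}$.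
   Context: Standing assumption: each $u_i$ is non-decreasing in every coordinate. $(x,{\boldsymbol\theta}_{-i})$ denotes ${\boldsymbol\theta}$ with $i$-th entry replaced by $x$. Utilities are well-behaved over $\prod_{i=1}^k[0,C_i]\subseteq\Theta$ if for each agent $i$ there are constants $c_1^i\ge0$, $c_2^i>0$ such that for all ${\boldsymbol\theta}$ in this box: $\partial u_i({\boldsymbol\theta})/\partial\theta_i\ge c_2^i$, and for all $j\ne i$, $0\le\partial u_i({\boldsymbol\theta})/\partial\theta_j\le c_1^i$. *)

theory Defs
  imports "HOL-Analysis.Analysis"
begin

text \<open>(x, theta_{-i}): theta with i-th entry replaced by x.\<close>
definition repl :: "real^'k \<Rightarrow> 'k \<Rightarrow> real \<Rightarrow> real^'k" where
  "repl \<theta> i x = (\<chi> j. if j = i then x else \<theta> $ j)"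

definition prodbox :: "('k::finite \<Rightarrow> real) \<Rightarrow> (real^'k) set" where
  "prodbox C = {\<theta>. \<forall>j. 0 \<le> \<theta> $ j \<and> \<theta> $ j \<le> C j}"

definition coord_mono :: "(real^'k) set \<Rightarrow> (real^'k \<Rightarrow> real) \<Rightarrow> bool" where
  "coord_mono \<Theta> v = (\<forall>\<theta> j x y. repl \<theta> j x \<in> \<Theta> \<and> repl \<theta> j y \<in> \<Theta> \<and> x \<le> y
       \<longrightarrow> v (repl \<theta> j x) \<le> v (repl \<theta> j y))"

text \<open>Well-behaved utilities over the box prod_i [0,C_i]; partial derivatives are taken
  along coordinate j within the interval [0, C_j] (one-sided at the box boundary).\<close>
definition well_behaved :: "('k::finite \<Rightarrow> real^'k \<Rightarrow> real) \<Rightarrow> ('k \<Rightarrow> real) \<Rightarrow> bool" where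
  "well_behaved u C = (\<forall>i. \<exists>c1 c2. c1 \<ge> 0 \<and> c2 > 0 \<and>
     (\<forall>\<theta>\<in>prodbox C. \<forall>j. \<exists>D.
        ((\<lambda>t. u i (repl \<theta> j t)) has_real_derivative D) (at (\<theta> $ j) within {0..C j}) \<and>
        (j = i \<longrightarrow> D \<ge> c2) \<and> (j \<noteq> i \<longrightarrow> 0 \<le> D \<and> D \<le> c1)))"

definition best_response :: "('k \<Rightarrow> real^'k \<Rightarrow> real) \<Rightarrow> ('k \<Rightarrow> real) \<Rightarrow> 'k \<Rightarrow> real^'k \<Rightarrow> real" where
  "best_response u \<mu> i \<theta> = (LEAST x::real. 0 \<le> x \<and> \<mu> i \<le> u i (repl \<theta> i x))"

end

theory Submission
  imports Defs
begin

lemma deriv_lower: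
  fixes h :: "real \<Rightarrow> real"
  assumes der: "\<And>t. t \<in> {0..C} \<Longrightarrow> \<exists>D. (h has_real_derivative D) (at t within {0..C}) \<and> lo \<le> D"
    and "0 \<le> s" "s \<le> t" "t \<le> C"
  shows "lo * (t - s) \<le> h t - h s"
proof -
  have cont: "continuous_on {0..C} h"
    unfolding continuous_on_eq_continuous_within using der DERIV_continuous by blast
  have "(\<lambda>x. h x - lo * x) s \<le> (\<lambda>x. h x - lo * x) t"
  proof (rule DERIV_nonneg_imp_increasing_open[OF \<open>s \<le> t\<close>])
    fix x assume x: "s < x" "x < t"
    then have x0: "0 < x" "x < C" using assms by auto
    obtain D where D: "(h has_real_derivative D) (at x within {0..C})" "lo \<le> D"
      using der[of x] x0 by auto
    have "(h has_real_derivative D) (at x)" using D(1) at_within_Icc_at[OF x0] by simp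
    then have "((\<lambda>x. h x - lo * x) has_real_derivative D - lo) (at x)"
      by (auto intro!: derivative_eq_intros)
    then show "\<exists>y. DERIV (\<lambda>x. h x - lo * x) x :> y \<and> 0 \<le> y" using D(2) by auto
  next
    show "continuous_on {s..t} (\<lambda>x. h x - lo * x)"
      by (intro continuous_intros continuous_on_subset[OF cont]) (use assms in auto)
  qed
  then show ?thesis by (simp add: algebra_simps)
qed

lemma deriv_upper:
  fixes h :: "real \<Rightarrow> real"
  assumes der: "\<And>t. t \<in> {0..C} \<Longrightarrow> \<exists>D. (h has_real_derivative D) (at t within {0..C}) \<and> D \<le> hi"
    and "0 \<le> s" "s \<le> t" "t \<le> C"
  shows "h t - h s \<le> hi * (t - s)"
proof -
  have "(-hi) * (t - s) \<le> (\<lambda>x. - h x) t - (\<lambda>x. - h x) s"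
  proof (rule deriv_lower[where C=C])
    fix t assume "t \<in> {0..C}"
    then obtain D where "(h has_real_derivative D) (at t within {0..C})" "D \<le> hi" using der by blast
    then show "\<exists>D. ((\<lambda>x. - h x) has_real_derivative D) (at t within {0..C}) \<and> - hi \<le> D"
      by (intro exI[of _ "-D"]) (auto intro!: derivative_eq_intros)
  qed (use assms in auto)
  then show ?thesis by (simp add: algebra_simps)
qed

lemma repl_nth [simp]: "repl p i x $ j = (if j = i then x else p $ j)"
  by (simp add: repl_def)

lemma repl_repl [simp]: "repl (repl p a t) a s = repl p a s"
  by (simp add: vec_eq_iff)

lemma repl_same: "repl p a (p $ a) = p"
  by (simp add: vec_eq_iff)


lemma per_agent:
  fixes u :: "'k::finite \<Rightarrow> real^'k \<Rightarrow> real"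
  assumes vt_nonneg: "\<And>i. 0 \<le> vt i"
    and vt_ok: "\<And>i. \<mu> i \<le> u i (repl 0 i (vt i))"
    and wb: "well_behaved u vt"
  shows "continuous_on (prodbox vt) (best_response u \<mu> i) \<and>
    (\<forall>\<theta>\<in>prodbox vt. 0 \<le> best_response u \<mu> i \<theta> \<and> best_response u \<mu> i \<theta> \<le> vt i)"
proof -
  let ?B = "prodbox vt"
  let ?br = "best_response u \<mu> i"
  have ex: "\<exists>c1 c2. c1 \<ge> 0 \<and> c2 > 0 \<and>
     (\<forall>\<theta>\<in>prodbox vt. \<forall>j. \<exists>D.
        ((\<lambda>t. u i (repl \<theta> j t)) has_real_derivative D) (at (\<theta> $ j) within {0..vt j}) \<and>
        (j = i \<longrightarrow> D \<ge> c2) \<and> (j \<noteq> i \<longrightarrow> 0 \<le> D \<and> D \<le> c1))"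
    using wb unfolding well_behaved_def by (rule spec)
  then obtain c1 c2 where c: "c1 \<ge> 0" "c2 > 0" and
    derb0: "\<forall>\<theta>\<in>prodbox vt. \<forall>j. \<exists>D.
        ((\<lambda>t. u i (repl \<theta> j t)) has_real_derivative D) (at (\<theta> $ j) within {0..vt j}) \<and>
        (j = i \<longrightarrow> D \<ge> c2) \<and> (j \<noteq> i \<longrightarrow> 0 \<le> D \<and> D \<le> c1)"
    by (elim exE conjE)
  have derb: "\<exists>D.
        ((\<lambda>t. u i (repl \<theta> j t)) has_real_derivative D) (at (\<theta> $ j) within {0..vt j}) \<and>
        (j = i \<longrightarrow> D \<ge> c2) \<and> (j \<noteq> i \<longrightarrow> 0 \<le> D \<and> D \<le> c1)" if "\<theta> \<in> ?B" for \<theta> j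
    using derb0 that by blast
  have line: "repl p j t \<in> ?B" if "p \<in> ?B" "t \<in> {0..vt j}" for p j t
    using that by (auto simp: prodbox_def)
  have hder: "\<exists>D. ((\<lambda>s. u i (repl p j s)) has_real_derivative D) (at t within {0..vt j}) \<and>
        (j = i \<longrightarrow> D \<ge> c2) \<and> (j \<noteq> i \<longrightarrow> 0 \<le> D \<and> D \<le> c1)"
    if "p \<in> ?B" "t \<in> {0..vt j}" for p j t
    using derb[OF line[OF that], of j] that(2) by (simp only: repl_repl repl_nth simp_thms if_True)
  have inB: "p $ j \<in> {0..vt j}" if "p \<in> ?B" for p j
    using that by (auto simp: prodbox_def)
  have step: "u i p - c1 * max 0 (p$a - t) \<le> u i (repl p a t)"
    if p: "p \<in> ?B" and a: "a \<noteq> i" and t: "t \<in> {0..vt a}" for p a t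
  proof -
    have hl: "\<exists>D. ((\<lambda>s. u i (repl p a s)) has_real_derivative D) (at s within {0..vt a}) \<and> 0 \<le> D"
      if "s \<in> {0..vt a}" for s
      using hder[OF p that] a by blast
    have hu: "\<exists>D. ((\<lambda>s. u i (repl p a s)) has_real_derivative D) (at s within {0..vt a}) \<and> D \<le> c1"
      if "s \<in> {0..vt a}" for s
      using hder[OF p that] a by blast
    have pa: "0 \<le> p$a" "p$a \<le> vt a" using inB[OF p, of a] by auto
    have t': "0 \<le> t" "t \<le> vt a" using t by auto
    show ?thesis
    proof (cases "p $ a \<le> t")
      case True
      have "0 * (t - p$a) \<le> u i (repl p a t) - u i (repl p a (p$a))"
        by (rule deriv_lower[where C="vt a", OF hl pa(1) True t'(2)])
      then show ?thesis using True by (simp add: repl_same)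
    next
      case False
      have tp: "t \<le> p$a" using False by linarith
      have "u i (repl p a (p$a)) - u i (repl p a t) \<le> c1 * (p$a - t)"
        by (rule deriv_upper[where C="vt a", OF hu t'(1) tp pa(2)])
      then show ?thesis using False by (simp add: repl_same)
    qed
  qed
  have gain: "u i (repl p i x) + c2 * (y - x) \<le> u i (repl p i y)"
    if p: "p \<in> ?B" and xy: "0 \<le> x" "x \<le> y" "y \<le> vt i" for p x y
  proof -
    have hl: "\<exists>D. ((\<lambda>s. u i (repl p i s)) has_real_derivative D) (at s within {0..vt i}) \<and> c2 \<le> D"
      if "s \<in> {0..vt i}" for s
      using hder[OF p that] by blast
    have "c2 * (y - x) \<le> u i (repl p i y) - u i (repl p i x)"
      by (rule deriv_lower[where C="vt i", OF hl xy])
    then show ?thesis by simp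
  qed
  have mix: "u i (repl \<theta> i y) - c1 * (\<Sum>j\<in>UNIV. max 0 (\<theta>$j - \<theta>'$j)) \<le> u i (repl \<theta>' i y)"
    if th: "\<theta> \<in> ?B" "\<theta>' \<in> ?B" and y: "y \<in> {0..vt i}" for \<theta> \<theta>' y
  proof -
    define m where "m S = (\<chi> j. if j = i then y else if j \<in> S then \<theta>'$j else \<theta>$j)" for S
    have mB: "m S \<in> ?B" for S
      using th y by (auto simp: prodbox_def m_def)
    have H: "u i (repl \<theta> i y) - c1 * (\<Sum>j\<in>S. max 0 (\<theta>$j - \<theta>'$j)) \<le> u i (m S)" if "finite S" for S
      using that
    proof (induction S rule: finite_induct)
      case empty
      have "m {} = repl \<theta> i y" by (simp add: m_def vec_eq_iff)
      then show ?case by simp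
    next
      case (insert a S)
      show ?case
      proof (cases "a = i")
        case True
        have "m (insert a S) = m S" using True by (simp add: m_def vec_eq_iff)
        moreover have "0 \<le> c1 * max 0 (\<theta>$a - \<theta>'$a)" using c by simp
        ultimately show ?thesis using insert by (simp add: sum.insert algebra_simps)
      next
        case False
        have e: "m (insert a S) = repl (m S) a (\<theta>'$a)"
          using False insert(2) by (auto simp: m_def vec_eq_iff)
        have ma: "m S $ a = \<theta>$a" using False insert(2) by (simp add: m_def)
        have "u i (m S) - c1 * max 0 (m S $ a - \<theta>'$a) \<le> u i (repl (m S) a (\<theta>'$a))"
          by (rule step[OF mB False inB[OF th(2)]])
        then show ?thesis using insert e ma by (simp add: sum.insert algebra_simps)
      qed
    qed
    have mU: "m UNIV = repl \<theta>' i y" by (simp add: m_def vec_eq_iff)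
    show ?thesis using H[OF finite_class.finite_UNIV] unfolding mU .
  qed
  have zB: "0 \<in> ?B" using vt_nonneg by (simp add: prodbox_def)
  have top: "\<mu> i \<le> u i (repl \<theta> i (vt i))" if th: "\<theta> \<in> ?B" for \<theta>
  proof -
    have "(\<Sum>j\<in>UNIV. max 0 ((0::real^'k)$j - \<theta>$j)) = 0"
      using th by (intro sum.neutral) (auto simp: prodbox_def)
    then show ?thesis using mix[OF zB th, of "vt i"] vt_ok[of i] vt_nonneg[of i] by simp
  qed
  have least: "0 \<le> ?br \<theta> \<and> ?br \<theta> \<le> vt i \<and> \<mu> i \<le> u i (repl \<theta> i (?br \<theta>)) \<and>
      (\<forall>x. 0 \<le> x \<and> \<mu> i \<le> u i (repl \<theta> i x) \<longrightarrow> ?br \<theta> \<le> x)" if th: "\<theta> \<in> ?B" for \<theta>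
  proof -
    let ?g = "\<lambda>x. u i (repl \<theta> i x)"
    have gc: "continuous_on {0..vt i} ?g"
      unfolding continuous_on_eq_continuous_within
      using hder[OF th, of _ i] DERIV_continuous by blast
    define S where "S = {0..vt i} \<inter> ?g -` {\<mu> i..}"
    have cl: "closed S" unfolding S_def by (rule continuous_closed_preimage[OF gc]) auto
    have vS: "vt i \<in> S" using top[OF th] vt_nonneg[of i] by (simp add: S_def)
    have bb: "bdd_below S" unfolding S_def by (rule bdd_belowI[of _ 0]) auto
    define m where "m = Inf S"
    have mS: "m \<in> S" unfolding m_def using closed_contains_Inf[OF _ bb cl] vS by auto
    have low: "m \<le> x" if "0 \<le> x" "\<mu> i \<le> ?g x" for x
    proof (cases "x \<le> vt i")
      case True
      then have "x \<in> S" using that by (simp add: S_def)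
      then show ?thesis unfolding m_def by (rule cInf_lower[OF _ bb])
    next
      case False
      then show ?thesis using mS by (auto simp: S_def)
    qed
    have "?br \<theta> = m"
      unfolding best_response_def
      by (rule Least_equality) (use mS low in \<open>auto simp: S_def\<close>)
    then show ?thesis using mS low by (auto simp: S_def)
  qed
  have lip1: "?br \<theta>' \<le> ?br \<theta> + c1 / c2 * (\<Sum>j\<in>UNIV. \<bar>\<theta>$j - \<theta>'$j\<bar>)"
    if th: "\<theta> \<in> ?B" "\<theta>' \<in> ?B" for \<theta> \<theta>'
  proof -
    define x where "x = ?br \<theta>"
    define d where "d = (\<Sum>j\<in>UNIV. \<bar>\<theta>$j - \<theta>'$j\<bar>)"
    have d0: "0 \<le> d" unfolding d_def by (intro sum_nonneg) auto
    have x: "0 \<le> x" "x \<le> vt i" "\<mu> i \<le> u i (repl \<theta> i x)"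
      using least[OF th(1)] by (auto simp: x_def)
    define y where "y = min (vt i) (x + c1 / c2 * d)"
    have cd: "0 \<le> c1 / c2 * d" using c d0 by simp
    have y0: "0 \<le> y" "y \<le> vt i" using x cd vt_nonneg[of i] by (auto simp: y_def)
    have Py: "\<mu> i \<le> u i (repl \<theta>' i y)"
    proof (cases "y = vt i")
      case True
      then show ?thesis using top[OF th(2)] by simp
    next
      case False
      then have ye: "y = x + c1 / c2 * d" by (auto simp: y_def)
      have s: "(\<Sum>j\<in>UNIV. max 0 (\<theta>$j - \<theta>'$j)) \<le> d"
        unfolding d_def by (intro sum_mono) auto
      have "u i (repl \<theta> i y) - c1 * d \<le> u i (repl \<theta>' i y)"
        using mix[OF th, of y] y0 s c(1) mult_left_mono[OF s c(1)] by auto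
      moreover have "u i (repl \<theta> i x) + c2 * (y - x) \<le> u i (repl \<theta> i y)"
        using gain[OF th(1) x(1) _ y0(2)] ye cd by auto
      moreover have "c2 * (y - x) = c1 * d" using ye c(2) by simp
      ultimately show ?thesis using x(3) by linarith
    qed
    have "?br \<theta>' \<le> y" using least[OF th(2)] Py y0 by blast
    then show ?thesis unfolding x_def d_def y_def by simp
  qed
  have sumb: "(\<Sum>j\<in>UNIV. \<bar>\<theta>$j - \<theta>'$j\<bar>) \<le> real CARD('k) * dist \<theta> \<theta>'" for \<theta> \<theta>' :: "real^'k"
  proof -
    have "(\<Sum>j\<in>UNIV. \<bar>\<theta>$j - \<theta>'$j\<bar>) \<le> (\<Sum>j\<in>(UNIV::'k set). dist \<theta> \<theta>')"
      by (intro sum_mono) (metis component_le_norm_cart dist_norm vector_minus_component)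
    then show ?thesis by simp
  qed
  have "(c1 / c2 * real CARD('k))-lipschitz_on ?B ?br"
  proof (rule lipschitz_onI)
    fix \<theta> \<theta>' assume th: "\<theta> \<in> ?B" "\<theta>' \<in> ?B"
    have K: "0 \<le> c1 / c2" using c by simp
    have a: "c1 / c2 * (\<Sum>j\<in>UNIV. \<bar>\<theta>$j - \<theta>'$j\<bar>) \<le> c1 / c2 * real CARD('k) * dist \<theta> \<theta>'"
      using mult_left_mono[OF sumb K] by (simp add: mult.assoc)
    have b: "c1 / c2 * (\<Sum>j\<in>UNIV. \<bar>\<theta>'$j - \<theta>$j\<bar>) \<le> c1 / c2 * real CARD('k) * dist \<theta> \<theta>'"
      using mult_left_mono[OF sumb[of \<theta>' \<theta>] K] by (simp add: mult.assoc dist_commute)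
    show "dist (?br \<theta>) (?br \<theta>') \<le> c1 / c2 * real CARD('k) * dist \<theta> \<theta>'"
      using lip1[OF th] lip1[OF th(2,1)] a b unfolding dist_real_def by linarith
  next
    show "0 \<le> c1 / c2 * real CARD('k)" using c by simp
  qed
  then have "continuous_on ?B ?br" by (rule lipschitz_on_continuous_on)
  then show ?thesis using least by blast
qed

theorem lemma1:
  fixes \<Theta> :: "(real^'k::finite) set"
    and u :: "'k \<Rightarrow> real^'k \<Rightarrow> real"
    and \<mu> :: "'k \<Rightarrow> real"
    and vt :: "'k \<Rightarrow> real"
  assumes strat: "\<Theta> \<subseteq> {\<theta>. \<forall>j. 0 \<le> \<theta> $ j}"
    and mono: "\<And>i. coord_mono \<Theta> (u i)"
    and vt_nonneg: "\<And>i. 0 \<le> vt i"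
    and vt_ok: "\<And>i. \<mu> i \<le> u i (repl 0 i (vt i))"
    and box_sub: "prodbox vt \<subseteq> \<Theta>"
    and wb: "well_behaved u vt"
  shows "\<exists>\<theta>\<in>prodbox vt. (\<chi> i. best_response u \<mu> i \<theta>) = \<theta>"
proof -
  note pa = per_agent[OF vt_nonneg vt_ok wb]
  have Bc: "prodbox vt = cbox 0 (\<chi> j. vt j)"
    by (auto simp: prodbox_def mem_box_cart)
  have cont: "continuous_on (prodbox vt) (\<lambda>\<theta>. \<chi> i. best_response u \<mu> i \<theta>)"
    by (intro continuous_on_vec_lambda) (use pa in blast)
  have "(0::real^'k) \<in> prodbox vt" using vt_nonneg by (simp add: prodbox_def)
  then have ne: "prodbox vt \<noteq> {}" by blast
  have im: "(\<lambda>\<theta>. \<chi> i. best_response u \<mu> i \<theta>) \<in> prodbox vt \<rightarrow> prodbox vt"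
    using pa by (auto simp: prodbox_def)
  obtain x where "x \<in> prodbox vt" "(\<chi> i. best_response u \<mu> i x) = x"
    using brouwer[of "prodbox vt", OF _ _ ne cont im] unfolding Bc by auto
  then show ?thesis by blast
qed

end
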